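(* Let $k\ge 1$ and assume that the block residuals $R_0,\dots,R_{k-1}$ produced by the BCG algorithm all have full column rank, so that all quantities up to $X_k,R_k$ are well defined. Then $$\mathfrak{E}_{k-1}=\Theta_{k-1}+\mathfrak{E}_{k},$$ and the matrix $\Theta_{k-1}=(R_{k-1}^TR_{k-1})\Upsilon_{k-1}$ is symmetric and positive definite. In particular, for each $i=1,\dots,m$, $$\|x^{(i)}-x^{(i)}_{k-1}\|_A^2=(\Theta_{k-1})_{i,i}+\|x^{(i)}-x^{(i)}_{k}\|_A^2\ \ge\ (\Theta_{k-1})_{i,i}>0,$$ where $x^{(i)}$ and $x^{(i)}_j$ denote the $i$th columns of $X$ and $X_j$.
   Context: Let $A\in\mathbb{R}^{n\times n}$ be symmetric positive definite, let $B,X_0\in\mathbb{R}^{n\times m}$, and let $X=A^{-1}B$. The block conjugate gradient (BCG) algorithm sets $R_0=B-AX_0$, $P_0=R_0$, and for $k=1,2,\dots$: $\Upsilon_{k-1}=(P_{k-1}^TAP_{k-1})^{-1}(R_{k-1}^TR_{k-1})$, $X_k=X_{k-1}+P_{k-1}\Upsilon_{k-1}$, $R_k=R_{k-1}-AP_{k-1}\Upsilon_{k-1}$, $\Xi_k=(R_{k-1}^TR_{k-1})^{-1}(R_k^TR_k)$, $P_k=R_k+P_{k-1}\Xi_k$. Define $\mathfrak{E}_k=(X-X_k)^TA(X-X_k)$ and $\Theta_k=(R_k^TR_k)\Upsilon_k$. For a vector $y$, $\|y\|_A=(y^TAy)^{1/2}$. *)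

theory Defs
  imports "HOL-Analysis.Analysis"
begin

fun bcg :: "real^'n^'n \<Rightarrow> real^'m^'n \<Rightarrow> real^'m^'n \<Rightarrow> nat
            \<Rightarrow> (real^'m^'n) \<times> (real^'m^'n) \<times> (real^'m^'n)" where
  "bcg A B X0 0 = (X0, B - A ** X0, B - A ** X0)"
| "bcg A B X0 (Suc k) =
     (let (X, R, P) = bcg A B X0 k;
          Ups = matrix_inv (transpose P ** A ** P) ** (transpose R ** R);
          X' = X + P ** Ups;
          R' = R - (A ** P) ** Ups;
          Xi = matrix_inv (transpose R ** R) ** (transpose R' ** R');
          P' = R' + P ** Xi
      in (X', R', P'))"

definition bcg_X where "bcg_X A B X0 k = fst (bcg A B X0 k)"
definition bcg_R where "bcg_R A B X0 k = fst (snd (bcg A B X0 k))"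
definition bcg_P where "bcg_P A B X0 k = snd (snd (bcg A B X0 k))"

definition bcg_Ups :: "real^'n^'n \<Rightarrow> real^'m^'n \<Rightarrow> real^'m^'n \<Rightarrow> nat \<Rightarrow> real^'m^'m" where
  "bcg_Ups A B X0 k =
     matrix_inv (transpose (bcg_P A B X0 k) ** A ** bcg_P A B X0 k)
       ** (transpose (bcg_R A B X0 k) ** bcg_R A B X0 k)"

definition bcg_Theta :: "real^'n^'n \<Rightarrow> real^'m^'n \<Rightarrow> real^'m^'n \<Rightarrow> nat \<Rightarrow> real^'m^'m" where
  "bcg_Theta A B X0 k = (transpose (bcg_R A B X0 k) ** bcg_R A B X0 k) ** bcg_Ups A B X0 k"

definition bcg_E :: "real^'n^'n \<Rightarrow> real^'m^'n \<Rightarrow> real^'m^'n \<Rightarrow> nat \<Rightarrow> real^'m^'m" where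
  "bcg_E A B X0 k =
     transpose (matrix_inv A ** B - bcg_X A B X0 k) ** A ** (matrix_inv A ** B - bcg_X A B X0 k)"

definition sym_posdef :: "real^'a^'a \<Rightarrow> bool" where
  "sym_posdef M \<longleftrightarrow> transpose M = M \<and> (\<forall>x. x \<noteq> 0 \<longrightarrow> x \<bullet> (M *v x) > 0)"

definition A_norm :: "real^'n^'n \<Rightarrow> real^'n \<Rightarrow> real" where
  "A_norm A y = sqrt (y \<bullet> (A *v y))"

end

theory Submission imports Defs begin

lemma transpose_add: "transpose (A + B) = transpose A + transpose (B::real^'a^'b)"
  by (simp add: transpose_def vec_eq_iff)
lemma transpose_diff: "transpose (A - B) = transpose A - transpose (B::real^'a^'b)"
  by (simp add: transpose_def vec_eq_iff)
lemma transpose_zero: "transpose (0::real^'a^'b) = 0"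
  by (simp add: transpose_def vec_eq_iff)
lemma mm_rdistrib: "(A + B) ** C = A ** C + B ** (C::real^'c^'a)"
  by (simp add: matrix_matrix_mult_def vec_eq_iff sum.distrib algebra_simps)
lemma mm_ldiff: "A ** (B - C) = A ** B - A ** (C::real^'c^'a)"
  by (simp add: matrix_matrix_mult_def vec_eq_iff sum_subtractf algebra_simps)
lemma mm_rdiff: "(A - B) ** C = A ** C - B ** (C::real^'c^'a)"
  by (simp add: matrix_matrix_mult_def vec_eq_iff sum_subtractf algebra_simps)

lemma dot_transpose: "inner x (transpose (Y::real^'a^'b) *v z) = inner (Y *v x) z"
  by (metis dot_lmul_matrix inner_commute transpose_matrix_vector)

lemma inv_props: assumes "invertible (M::real^'a^'a)"
  shows "M ** matrix_inv M = mat 1" "matrix_inv M ** M = mat 1"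
proof -
  have "\<exists>A'. M ** A' = mat 1 \<and> A' ** M = mat 1" using assms invertible_def by blast
  hence "M ** matrix_inv M = mat 1 \<and> matrix_inv M ** M = mat 1"
    unfolding matrix_inv_def by (rule someI_ex)
  thus "M ** matrix_inv M = mat 1" "matrix_inv M ** M = mat 1" by auto
qed

lemma spd_invertible: assumes "sym_posdef (M::real^'a^'a)" shows "invertible M"
proof -
  have "\<forall>x. M *v x = 0 \<longrightarrow> x = 0"
    using assms unfolding sym_posdef_def by (metis inner_zero_right less_irrefl)
  thus ?thesis using matrix_left_invertible_ker invertible_left_inverse by blast
qed

lemma quad: "inner x ((transpose P ** A ** P) *v x) = inner (P *v x) (A *v (P *v (x::real^'a)))"
  by (metis dot_transpose matrix_vector_mul_assoc)

lemma spd_congr: assumes "sym_posdef (A::real^'n^'n)" "\<forall>x. P *v x = 0 \<longrightarrow> x = 0"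
  shows "sym_posdef (transpose (P::real^'m^'n) ** A ** P)"
  unfolding sym_posdef_def
proof (intro conjI allI impI)
  have "transpose A = A" using assms(1) sym_posdef_def by blast
  thus "transpose (transpose P ** A ** P) = transpose P ** A ** P"
    by (simp add: matrix_transpose_mul matrix_mul_assoc)
next
  fix x :: "real^'m" assume "x \<noteq> 0"
  hence "P *v x \<noteq> 0" using assms(2) by blast
  thus "0 < inner x ((transpose P ** A ** P) *v x)" unfolding quad
    using assms(1) sym_posdef_def by blast
qed

lemma spd_gram: assumes "rank (R::real^'m^'n) = CARD('m)"
  shows "sym_posdef (transpose R ** R)"
proof -
  have "\<forall>x. R *v x = 0 \<longrightarrow> x = 0"
    using assms full_rank_injective by (metis inj_eq matrix_vector_mult_0_right)
  hence "sym_posdef (transpose R ** mat 1 ** R)"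
    by (intro spd_congr) (auto simp: sym_posdef_def)
  thus ?thesis by simp
qed

lemma spd_inv: assumes "sym_posdef (M::real^'a^'a)" shows "sym_posdef (matrix_inv M)"
proof -
  have inv: "M ** matrix_inv M = mat 1" "matrix_inv M ** M = mat 1"
    using inv_props spd_invertible assms by blast+
  have sM: "transpose M = M" using assms sym_posdef_def by blast
  have "transpose (matrix_inv M) = transpose (matrix_inv M) ** (M ** matrix_inv M)"
    using inv by simp
  also have "\<dots> = transpose (M ** matrix_inv M) ** matrix_inv M"
    by (simp add: matrix_transpose_mul matrix_mul_assoc sM)
  also have "\<dots> = matrix_inv M" using inv by simp
  finally have s: "transpose (matrix_inv M) = matrix_inv M" .
  show ?thesis unfolding sym_posdef_def
  proof (intro conjI allI impI s)
    fix y :: "real^'a" assume "y \<noteq> 0"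
    define z where "z = matrix_inv M *v y"
    have yz: "y = M *v z" unfolding z_def using inv by (simp add: matrix_vector_mul_assoc)
    hence "z \<noteq> 0" using \<open>y \<noteq> 0\<close> by auto
    hence "inner z (M *v z) > 0" using assms sym_posdef_def by blast
    moreover have "inner y (matrix_inv M *v y) = inner z (M *v z)"
      using yz by (simp add: z_def inner_commute)
    ultimately show "inner y (matrix_inv M *v y) > 0" by simp
  qed
qed

lemma spd_sandwich: assumes "sym_posdef (G::real^'a^'a)" "sym_posdef N"
  shows "sym_posdef (G ** N ** G)"
proof -
  have sG: "transpose G = G" using assms sym_posdef_def by blast
  have "\<forall>x. G *v x = 0 \<longrightarrow> x = 0"
    using assms(1) unfolding sym_posdef_def by (metis inner_zero_right less_irrefl)
  from spd_congr[OF assms(2) this] show ?thesis by (simp add: sG)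
qed

lemma bcg_Suc:
  "bcg_X A B X0 (Suc j) = bcg_X A B X0 j + bcg_P A B X0 j ** bcg_Ups A B X0 j"
  "bcg_R A B X0 (Suc j) = bcg_R A B X0 j - (A ** bcg_P A B X0 j) ** bcg_Ups A B X0 j"
  "\<exists>Xi. bcg_P A B X0 (Suc j) = bcg_R A B X0 (Suc j) + bcg_P A B X0 j ** Xi"
  by (auto simp: bcg_X_def bcg_R_def bcg_P_def bcg_Ups_def Let_def split: prod.split)

lemma bcg_resid: "bcg_R A B X0 j = B - A ** bcg_X A B X0 j"
proof (induction j)
  case 0 thus ?case by (simp add: bcg_X_def bcg_R_def)
next
  case (Suc j)
  show ?case unfolding bcg_Suc Suc matrix_add_ldistrib
    by (simp add: matrix_mul_assoc)
qed

lemma bcg_orth: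
  assumes "sym_posdef A" "\<forall>i<j. rank (bcg_R A B X0 i) = CARD('m)"
  shows "transpose (bcg_P A B X0 j) ** bcg_R A B X0 j
         = transpose (bcg_R A B X0 j) ** (bcg_R A B X0 j :: real^'m^'n)"
  using assms(2)
proof (induction j)
  case 0 thus ?case by (simp add: bcg_P_def bcg_R_def)
next
  case (Suc j)
  define P where "P = bcg_P A B X0 j"
  define R where "R = bcg_R A B X0 j"
  define R' where "R' = bcg_R A B X0 (Suc j)"
  define G where "G = transpose R ** R"
  define M where "M = transpose P ** A ** P"
  have IH: "transpose P ** R = G" using Suc by (simp add: P_def R_def G_def)
  have rk: "rank R = CARD('m)" using Suc.prems R_def by auto
  have sG: "sym_posdef G" unfolding G_def using spd_gram[OF rk] .
  have inj: "\<forall>x. P *v x = 0 \<longrightarrow> x = 0"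
  proof (intro allI impI)
    fix x assume "P *v x = 0"
    hence "transpose R *v (P *v x) = 0" by simp
    moreover have "transpose R ** P = G"
      using IH sG by (metis matrix_transpose_mul sym_posdef_def transpose_transpose)
    ultimately have "G *v x = 0" by (simp add: matrix_vector_mul_assoc)
    thus "x = 0" using sG unfolding sym_posdef_def by (metis inner_zero_right less_irrefl)
  qed
  have sM: "sym_posdef M" unfolding M_def using spd_congr[OF assms(1) inj] .
  have Minv: "M ** matrix_inv M = mat 1" using inv_props spd_invertible sM by blast
  have Ups: "bcg_Ups A B X0 j = matrix_inv M ** G"
    by (simp add: bcg_Ups_def M_def G_def P_def R_def)
  have "transpose P ** R' = 0"
  proof -
    have "transpose P ** R' = G - transpose P ** (A ** P) ** (matrix_inv M ** G)"
      unfolding R'_def bcg_Suc Ups by (simp add: mm_ldiff P_def R_def IH[unfolded P_def R_def] matrix_mul_assoc)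
    also have "\<dots> = G - (M ** matrix_inv M) ** G" by (simp add: M_def matrix_mul_assoc)
    finally show ?thesis using Minv by simp
  qed
  moreover obtain Xi where "bcg_P A B X0 (Suc j) = R' + P ** Xi"
    using bcg_Suc(3) R'_def P_def by blast
  ultimately show ?case
    by (simp add: R'_def[symmetric] transpose_add mm_rdistrib matrix_transpose_mul
        flip: matrix_mul_assoc)
qed

lemma entry_axis: "(M::real^'a^'b) $ i $ j = inner (axis i 1) (M *v axis j 1)"
proof -
  have "(M *v axis j 1) $ i = M $ i $ j" by (simp add: matrix_vector_mult_basis column_def)
  thus ?thesis by (metis cart_eq_inner_axis inner_commute)
qed

lemma quad_entry: "(transpose (Y::real^'m^'n) ** A ** Y) $ i $ i = inner (column i Y) (A *v column i Y)"
proof -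
  have "(transpose Y ** A ** Y) $ i $ i = inner (axis i 1) ((transpose Y ** A ** Y) *v axis i 1)"
    by (rule entry_axis)
  also have "\<dots> = inner (column i Y) (A *v column i Y)"
    unfolding quad by (simp only: matrix_vector_mult_basis)
  finally show ?thesis .
qed

theorem theorem1:
  fixes A :: "real^'n^'n" and B X0 :: "real^'m^'n" and k :: nat
  assumes "sym_posdef A"
    and "k \<ge> 1"
    and "\<forall>j<k. rank (bcg_R A B X0 j) = CARD('m)"
  shows "bcg_E A B X0 (k - 1) = bcg_Theta A B X0 (k - 1) + bcg_E A B X0 k
       \<and> sym_posdef (bcg_Theta A B X0 (k - 1))
       \<and> (\<forall>i. (A_norm A (column i (matrix_inv A ** B) - column i (bcg_X A B X0 (k - 1))))\<^sup>2
                 = bcg_Theta A B X0 (k - 1) $ i $ i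
                   + (A_norm A (column i (matrix_inv A ** B) - column i (bcg_X A B X0 k)))\<^sup>2
             \<and> bcg_Theta A B X0 (k - 1) $ i $ i
                   + (A_norm A (column i (matrix_inv A ** B) - column i (bcg_X A B X0 k)))\<^sup>2
                 \<ge> bcg_Theta A B X0 (k - 1) $ i $ i
             \<and> bcg_Theta A B X0 (k - 1) $ i $ i > 0)"
proof -
  obtain j where kj: "k = Suc j" using assms(2) by (cases k) auto
  have km: "k - 1 = j" using kj by simp
  define P where "P = bcg_P A B X0 j"
  define R where "R = bcg_R A B X0 j"
  define R' where "R' = bcg_R A B X0 k"
  define G where "G = transpose R ** R"
  define M where "M = transpose P ** A ** P"
  define Xs where "Xs = matrix_inv A ** B"
  define Y where "Y = Xs - bcg_X A B X0 k"
  define Y0 where "Y0 = Xs - bcg_X A B X0 j"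
  have sA: "transpose A = A" using assms(1) sym_posdef_def by blast
  have Ainv: "A ** matrix_inv A = mat 1" using inv_props spd_invertible assms(1) by blast
  have IH: "transpose P ** R = G"
    using bcg_orth[OF assms(1), of j B X0] assms(3) kj by (simp add: P_def R_def G_def)
  have rk: "rank R = CARD('m)" using assms(3) R_def kj by auto
  have sG: "sym_posdef G" unfolding G_def using spd_gram[OF rk] .
  have GT: "transpose G = G" using sG sym_posdef_def by blast
  have inj: "\<forall>x. P *v x = 0 \<longrightarrow> x = 0"
  proof (intro allI impI)
    fix x assume "P *v x = 0"
    hence "transpose R *v (P *v x) = 0" by simp
    moreover have "transpose R ** P = G"
      using IH sG by (metis matrix_transpose_mul sym_posdef_def transpose_transpose)
    ultimately have "G *v x = 0" by (simp add: matrix_vector_mul_assoc)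
    thus "x = 0" using sG unfolding sym_posdef_def by (metis inner_zero_right less_irrefl)
  qed
  have sM: "sym_posdef M" unfolding M_def using spd_congr[OF assms(1) inj] .
  have Minv: "M ** matrix_inv M = mat 1" using inv_props spd_invertible sM by blast
  have sMi: "sym_posdef (matrix_inv M)" using spd_inv[OF sM] .
  have MiT: "transpose (matrix_inv M) = matrix_inv M" using sMi sym_posdef_def by blast
  have Ups: "bcg_Ups A B X0 j = matrix_inv M ** G"
    by (simp add: bcg_Ups_def M_def G_def P_def R_def)
  have Theta: "bcg_Theta A B X0 j = G ** matrix_inv M ** G"
    by (simp add: bcg_Theta_def Ups G_def R_def matrix_mul_assoc)
  have spdT: "sym_posdef (bcg_Theta A B X0 j)" unfolding Theta using spd_sandwich[OF sG sMi] .
  have orth: "transpose P ** R' = 0"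
  proof -
    have "transpose P ** R' = G - transpose P ** (A ** P) ** (matrix_inv M ** G)"
      unfolding R'_def kj bcg_Suc Ups by (simp add: mm_ldiff P_def R_def IH[unfolded P_def R_def] matrix_mul_assoc)
    also have "\<dots> = G - (M ** matrix_inv M) ** G" by (simp add: M_def matrix_mul_assoc)
    finally show ?thesis using Minv by simp
  qed
  have AY: "A ** Y = R'"
    by (simp add: Y_def Xs_def R'_def bcg_resid[of A B X0 k] mm_ldiff matrix_mul_assoc Ainv)
  define U where "U = matrix_inv M ** G"
  have Y0: "Y0 = Y + P ** U"
    unfolding Y0_def Y_def kj bcg_Suc Ups U_def P_def by simp
  have t1: "transpose Y ** A ** (P ** U) = 0"
  proof -
    have "transpose Y ** A = transpose R'" using AY sA by (metis matrix_transpose_mul)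
    moreover have "transpose R' ** P = 0"
      using orth by (metis matrix_transpose_mul transpose_transpose transpose_zero)
    ultimately show ?thesis by (simp add: matrix_mul_assoc)
  qed
  have t2: "transpose (P ** U) ** A ** Y = 0"
    by (simp add: matrix_transpose_mul AY orth flip: matrix_mul_assoc)
  have t3: "transpose (P ** U) ** A ** (P ** U) = G ** matrix_inv M ** G"
  proof -
    have "transpose (P ** U) ** A ** (P ** U) = transpose U ** M ** U"
      by (simp add: matrix_transpose_mul M_def matrix_mul_assoc)
    also have "\<dots> = transpose U ** (M ** matrix_inv M) ** G"
      by (simp add: U_def matrix_mul_assoc)
    also have "\<dots> = G ** matrix_inv M ** G"
      by (simp add: Minv U_def matrix_transpose_mul GT MiT)
    finally show ?thesis .
  qed
  have Eeq: "bcg_E A B X0 j = bcg_Theta A B X0 j + bcg_E A B X0 k"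
  proof -
    have "bcg_E A B X0 j = transpose Y0 ** A ** Y0" by (simp add: bcg_E_def Y0_def Xs_def)
    also have "\<dots> = transpose Y ** A ** Y + transpose Y ** A ** (P ** U)
        + (transpose (P ** U) ** A ** Y + transpose (P ** U) ** A ** (P ** U))"
      unfolding Y0 by (simp add: transpose_add mm_rdistrib matrix_add_ldistrib)
    also have "\<dots> = bcg_Theta A B X0 j + bcg_E A B X0 k"
      using t1 t2 t3 Theta by (simp add: bcg_E_def Y_def Xs_def)
    finally show ?thesis .
  qed
  have nn: "inner y (A *v y) \<ge> 0" for y
    using assms(1) unfolding sym_posdef_def by (metis order.strict_implies_order inner_zero_left order.refl)
  have sq: "(A_norm A y)\<^sup>2 = inner y (A *v y)" for y
    using nn[of y] by (simp add: A_norm_def)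
  have diag: "(A_norm A (column i Xs - column i (bcg_X A B X0 l)))\<^sup>2 = bcg_E A B X0 l $ i $ i" for i l
  proof -
    have "column i Xs - column i (bcg_X A B X0 l) = column i (Xs - bcg_X A B X0 l)"
      by (simp add: column_def vec_eq_iff)
    thus ?thesis by (simp add: sq bcg_E_def quad_entry Xs_def)
  qed
  have pos: "bcg_Theta A B X0 j $ i $ i > 0" for i
  proof -
    have "inner (axis i 1) (bcg_Theta A B X0 j *v axis i 1) > 0"
      using spdT unfolding sym_posdef_def by (simp add: axis_eq_0_iff)
    thus ?thesis by (simp add: entry_axis)
  qed
  have Ek: "bcg_E A B X0 k $ i $ i \<ge> 0" for i
    using diag[of i k] by (metis zero_le_power2)
  show ?thesis unfolding km
    using Ek
    using Eeq spdT pos diag[of _ j, unfolded Xs_def] diag[of _ k, unfolded Xs_def] Eeq nn sq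
    by (auto simp: Eeq)
qed

end
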